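(* Let $q\ge 2$ be even and let $C\subseteq B_q^4$ be a code with $\rho(C)>2$ (i.e. $C$ is capable of correcting single deletions). Then $|C|\le \dfrac{q^2(q+2)}{4}$.
   Context: $B_q=\{0,1,\dots,q-1\}$, $B_q^n$ is the set of words of length $n$ over $B_q$. The deletion–insertion distance $\rho(x,y)$ is the minimum number of deletions and insertions of letters needed to transform $x$ into $y$; for a code $C$ with $|C|\ge2$, $\rho(C)$ is the minimum of $\rho(x,y)$ over distinct $x,y\in C$. For a word $x$, $\lfloor x\rfloor_1$ is the set of words obtained from $x$ by deleting one letter. A code $C\subseteq B_q^n$ is capable of correcting single deletions if the sets $\lfloor x\rfloor_1$ ($x\in C$) are pairwise disjoint; this is equivalent to $\rho(C)>2$. *)

theory Defs
  imports Complex_Main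
begin

definition words :: "nat \<Rightarrow> nat \<Rightarrow> nat list set" where
  "words q n = {x. length x = n \<and> set x \<subseteq> {0..<q}}"

definition del1 :: "nat list \<Rightarrow> nat list set" where
  "del1 x = {take i x @ drop (Suc i) x | i. i < length x}"

definition single_deletion_correcting :: "nat list set \<Rightarrow> bool" where
  "single_deletion_correcting C \<longleftrightarrow>
     (\<forall>x\<in>C. \<forall>y\<in>C. x \<noteq> y \<longrightarrow> del1 x \<inter> del1 y = {})"

end

theory Submission imports Defs begin
definition W :: "nat list \<Rightarrow> nat" where
 "W y = (if y!0 = y!1 then 2 else 1) * (if y!1 = y!2 then 2 else 1)"
definition Aset :: "nat list set" where
 "Aset = {y. length y = 3 \<and> y!0 = y!2 \<and> y!0 \<noteq> y!1}"
definition P :: "nat list \<Rightarrow> bool" where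
 "P x \<longleftrightarrow> x!0 = x!3 \<and> x!0 \<noteq> x!1 \<and> x!0 \<noteq> x!2 \<and> x!1 \<noteq> x!2"
definition N :: "nat list \<Rightarrow> nat" where
 "N x = (if P x then 0 else card (del1 x \<inter> Aset))"

lemma del4: "del1 [a,b,c,d] = {[b,c,d],[a,c,d],[a,b,d],[a,b,c]}"
proof -
  have "{i::nat. i < 4} = {0,1,2,3}" by auto
  have "del1 [a,b,c,d] = (\<lambda>i. take i [a,b,c,d] @ drop (Suc i) [a,b,c,d]) ` {i. i < 4}"
    unfolding del1_def by auto
  also have "\<dots> = {[b,c,d],[a,c,d],[a,b,d],[a,b,c]}" using \<open>{i::nat. i < 4} = {0,1,2,3}\<close> by simp
  finally show ?thesis .
qed

lemma key: "4 + N [a,b,c,d] \<le> sum W (del1 [a,b,c,d])"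
  unfolding del4 N_def P_def
  by (cases "a=b"; cases "a=c"; cases "a=d"; cases "b=c"; cases "b=d"; cases "c=d";
      simp add: W_def Aset_def card_insert_if)

lemma words4: "x \<in> words q 4 \<Longrightarrow> \<exists>a b c d. x = [a,b,c,d] \<and> a < q \<and> b < q \<and> c < q \<and> d < q"
  unfolding words_def by (auto simp: length_Suc_conv numeral_eq_Suc)

lemma del_words: "x \<in> words q 4 \<Longrightarrow> del1 x \<subseteq> words q 3"
  using words4[of x q] by (auto simp: del4 words_def)

lemma finite_words: "finite (words q n)"
proof -
  have "words q n = {xs. set xs \<subseteq> {0..<q} \<and> length xs = n}" unfolding words_def by auto
  thus ?thesis using finite_lists_length_eq[of "{0..<q}" n] by simp
qed

lemma P_del: "x \<in> words q 4 \<Longrightarrow> P x \<Longrightarrow> del1 x \<inter> Aset = {[x!0,x!1,x!0],[x!0,x!2,x!0]}"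
  using words4[of x q] by (auto simp: del4 P_def Aset_def)

lemma P_card: "x \<in> words q 4 \<Longrightarrow> P x \<Longrightarrow> card (del1 x \<inter> Aset) = 2"
  using P_del[of x q] by (simp add: P_def)

lemma words_Suc: "words q (Suc n) = (\<lambda>(a,xs). a#xs) ` ({..<q} \<times> words q n)"
  unfolding words_def by (auto simp: length_Suc_conv image_iff)

lemma sum_words_Suc: "sum f (words q (Suc n)) = (\<Sum>a<q. sum (\<lambda>xs. f (a#xs)) (words q n))"
proof -
  have "inj_on (\<lambda>(a,xs). a#xs) ({..<q} \<times> words q n)" by (auto simp: inj_on_def)
  hence "sum f (words q (Suc n)) = sum (f \<circ> (\<lambda>(a,xs). a#xs)) ({..<q} \<times> words q n)"
    unfolding words_Suc by (rule sum.reindex)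
  also have "\<dots> = (\<Sum>a<q. sum (\<lambda>xs. f (a#xs)) (words q n))"
    by (simp add: sum.cartesian_product split_def o_def)
  finally show ?thesis .
qed

lemma words0: "words q 0 = {[]}" unfolding words_def by auto

lemma sum_if2: "(\<Sum>c<q. (if b=c then 2 else 1::nat)) = q + (if b<q then 1 else 0)"
  by (induction q) auto

lemma sumW: "sum W (words q 3) = q^3 + 2*q^2 + q"
proof -
  have "sum W (words q 3) = (\<Sum>a<q. \<Sum>b<q. \<Sum>c<q. W [a,b,c])"
    by (simp add: numeral_eq_Suc sum_words_Suc words0)
  also have "\<dots> = (\<Sum>a<q. \<Sum>b<q. (if a=b then 2 else 1) * (q+1))"
    by (simp add: W_def sum_distrib_left[symmetric] sum_if2)
  also have "\<dots> = (\<Sum>a<q. (q+1) * (q+1))"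
  proof (rule sum.cong)
    fix a assume "a \<in> {..<q}"
    hence "(\<Sum>b<q. (if a=b then 2 else 1::nat)) = q+1" by (subst sum_if2) simp
    thus "(\<Sum>b<q. (if a=b then 2 else 1) * (q+1)) = (q+1)*(q+1)"
      by (simp only: sum_distrib_right[symmetric])
  qed simp
  also have "\<dots> = q^3 + 2*q^2 + q" by (simp add: algebra_simps power2_eq_square power3_eq_cube)
  finally show ?thesis .
qed
theorem theorem2p1:
  fixes q :: nat and C :: "nat list set"
  assumes "q \<ge> 2" and "even q"
    and "C \<subseteq> words q 4"
    and "single_deletion_correcting C"
  shows "real (card C) \<le> real (q^2 * (q + 2)) / 4"
proof -
  note CW = assms(3)
  have finC: "finite C" using finite_subset[OF CW finite_words] .
  define U where "U = \<Union> (del1 ` C)"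
  have UW: "U \<subseteq> words q 3" using CW del_words unfolding U_def by blast
  have finU: "finite U" using finite_subset[OF UW finite_words] .
  have findel: "\<And>x. x \<in> C \<Longrightarrow> finite (del1 x)"
    using finite_subset[OF del_words finite_words] CW by blast
  have disj: "\<And>x y. x \<in> C \<Longrightarrow> y \<in> C \<Longrightarrow> x \<noteq> y \<Longrightarrow> del1 x \<inter> del1 y = {}"
    using assms(4) unfolding single_deletion_correcting_def by blast
  have sumU: "sum W U = (\<Sum>x\<in>C. sum W (del1 x))"
    unfolding U_def by (rule sum.UNION_disjoint) (use finC findel disj in auto)
  have step1: "4 * card C + (\<Sum>x\<in>C. N x) \<le> sum W U"
  proof -
    have "4 * card C + (\<Sum>x\<in>C. N x) = (\<Sum>x\<in>C. 4 + N x)" by (simp add: sum.distrib)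
    also have "\<dots> \<le> (\<Sum>x\<in>C. sum W (del1 x))"
    proof (rule sum_mono)
      fix x assume "x \<in> C"
      then obtain a b c d where "x = [a,b,c,d]" using words4 CW by blast
      thus "4 + N x \<le> sum W (del1 x)" using key by simp
    qed
    finally show ?thesis using sumU by simp
  qed
  define A' where "A' = Aset \<inter> words q 3"
  have step2: "sum W U + card (A' - U) \<le> sum W (words q 3)"
  proof -
    have "sum W (words q 3) = sum W U + sum W (words q 3 - U)"
      using sum.subset_diff[OF UW finite_words, of W] by simp
    moreover have "card (A' - U) \<le> card (words q 3 - U)"
      by (rule card_mono) (auto simp: A'_def finite_words)
    moreover have "card (words q 3 - U) \<le> sum W (words q 3 - U)"
    proof -
      have "card (words q 3 - U) = (\<Sum>y\<in>words q 3 - U. 1)" by simp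
      also have "\<dots> \<le> sum W (words q 3 - U)" by (rule sum_mono) (simp add: W_def)
      finally show ?thesis .
    qed
    ultimately show ?thesis by linarith
  qed
  define Wit where "Wit = (A' - U) \<union> (\<Union>x\<in>C. if P x then {} else del1 x \<inter> Aset)"
  have finWit: "finite Wit"
  proof -
    have "\<forall>x\<in>C. del1 x \<subseteq> words q 3" using CW del_words by blast
    hence "Wit \<subseteq> words q 3" unfolding Wit_def A'_def by auto
    thus ?thesis using finite_subset finite_words by metis
  qed
  have cardWit: "card Wit \<le> card (A' - U) + (\<Sum>x\<in>C. N x)"
  proof -
    have "card Wit \<le> card (A' - U) + card (\<Union>x\<in>C. if P x then {} else del1 x \<inter> Aset)"
      unfolding Wit_def by (rule card_Un_le)
    also have "card (\<Union>x\<in>C. if P x then {} else del1 x \<inter> Aset) \<le> (\<Sum>x\<in>C. card (if P x then {} else del1 x \<inter> Aset))"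
      by (rule card_UN_le[OF finC])
    also have "\<dots> = (\<Sum>x\<in>C. N x)" by (rule sum.cong) (auto simp: N_def)
    finally show ?thesis by simp
  qed
  have hit: "\<exists>y\<in>Wit. y!0 = a" if aq: "a < q" for a
  proof (rule ccontr)
    assume nh: "\<not> (\<exists>y\<in>Wit. y!0 = a)"
    define Aa where "Aa = (\<lambda>b. [a,b,a]) ` ({..<q} - {a})"
    define Ca where "Ca = {x\<in>C. P x \<and> x!0 = a}"
    have cAa: "card Aa = q - 1"
    proof -
      have "inj_on (\<lambda>b. [a,b,a]) ({..<q} - {a})" by (auto simp: inj_on_def)
      hence "card Aa = card ({..<q} - {a})" unfolding Aa_def by (rule card_image)
      thus ?thesis using aq by simp
    qed
    have eq: "Aa = (\<Union>x\<in>Ca. del1 x \<inter> Aset)"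
    proof
      show "Aa \<subseteq> (\<Union>x\<in>Ca. del1 x \<inter> Aset)"
      proof
        fix y assume yA: "y \<in> Aa"
        hence yA': "y \<in> A'" unfolding Aa_def A'_def Aset_def words_def using aq by auto
        have y0: "y!0 = a" using yA unfolding Aa_def by auto
        have "y \<notin> A' - U"
        proof
          assume "y \<in> A' - U"
          hence "y \<in> Wit" unfolding Wit_def by (rule UnI1)
          thus False using nh y0 by blast
        qed
        hence "y \<in> U" using yA' by blast
        then obtain x where xC: "x \<in> C" and yx: "y \<in> del1 x" unfolding U_def by blast
        have yAs: "y \<in> Aset" using yA' A'_def by blast
        have Px: "P x"
        proof (rule ccontr)
          assume "\<not> P x"
          hence "y \<in> Wit" unfolding Wit_def using xC yx yAs by auto
          thus False using nh y0 by blast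
        qed
        have "del1 x \<inter> Aset = {[x!0,x!1,x!0],[x!0,x!2,x!0]}" by (rule P_del[of x q]) (use xC CW Px in auto)
        hence "y \<in> {[x!0,x!1,x!0],[x!0,x!2,x!0]}" using yx yAs by blast
        hence "x!0 = a" using y0 by auto
        thus "y \<in> (\<Union>x\<in>Ca. del1 x \<inter> Aset)" using xC Px yx yAs unfolding Ca_def by blast
      qed
    next
      show "(\<Union>x\<in>Ca. del1 x \<inter> Aset) \<subseteq> Aa"
      proof
        fix y assume "y \<in> (\<Union>x\<in>Ca. del1 x \<inter> Aset)"
        then obtain x where xCa: "x \<in> Ca" and yx: "y \<in> del1 x \<inter> Aset" by blast
        have xW: "x \<in> words q 4" and Px: "P x" and x0: "x!0 = a" using xCa CW unfolding Ca_def by auto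
        obtain a' b c d where xe: "x = [a',b,c,d]" "a' < q" "b < q" "c < q" "d < q" using words4[OF xW] by blast
        have "y \<in> {[x!0,x!1,x!0],[x!0,x!2,x!0]}" using P_del[OF xW Px] yx by blast
        thus "y \<in> Aa" using xe x0 Px unfolding Aa_def P_def by auto
      qed
    qed
    have finCa: "finite Ca" using finC unfolding Ca_def by simp
    have "card Aa = (\<Sum>x\<in>Ca. card (del1 x \<inter> Aset))"
      unfolding eq
    proof (rule card_UN_disjoint[OF finCa])
      show "\<forall>i\<in>Ca. finite (del1 i \<inter> Aset)" using findel unfolding Ca_def by auto
      show "\<forall>i\<in>Ca. \<forall>j\<in>Ca. i \<noteq> j \<longrightarrow> del1 i \<inter> Aset \<inter> (del1 j \<inter> Aset) = {}"
      proof (intro ballI impI)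
        fix i j assume "i \<in> Ca" "j \<in> Ca" "i \<noteq> j"
        hence "del1 i \<inter> del1 j = {}" using disj unfolding Ca_def by auto
        thus "del1 i \<inter> Aset \<inter> (del1 j \<inter> Aset) = {}" by blast
      qed
    qed
    also have "\<dots> = (\<Sum>x\<in>Ca. 2)"
      by (rule sum.cong) (use CW P_card in \<open>auto simp: Ca_def\<close>)
    finally have "q - 1 = 2 * card Ca" using cAa by simp
    thus False using assms(1,2) by presburger
  qed
  have "{..<q} \<subseteq> (\<lambda>y. y!0) ` Wit"
  proof
    fix a assume "a \<in> {..<q}"
    then obtain y where "y \<in> Wit" "y!0 = a" using hit by auto
    thus "a \<in> (\<lambda>y. y!0) ` Wit" by force
  qed
  hence "q \<le> card ((\<lambda>y. y!0) ` Wit)" using card_mono[OF finite_imageI[OF finWit]] by fastforce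
  also have "\<dots> \<le> card Wit" by (rule card_image_le[OF finWit])
  finally have "q \<le> card Wit" .
  hence "4 * card C + q \<le> q^3 + 2*q^2 + q"
    using step1 step2 cardWit sumW[of q] by linarith
  hence "4 * card C \<le> q^2 * (q + 2)" by (simp add: algebra_simps power2_eq_square power3_eq_cube)
  hence "real (4 * card C) \<le> real (q^2 * (q + 2))" by (rule of_nat_mono)
  thus ?thesis by simp
qed
end
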